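(* Let $N_1=(S_1,T_1,F_1,M_{0,1},\ell)$ and $N_2=(S_2,T_2,F_2,M_{0,2},\ell_2)$ be two Petri nets, $N_2$ being plain. Then $N_1$ and $N_2$ are branching ST-bisimilar (with explicit divergence) iff they are branching split bisimilar (with explicit divergence).
   Context: Fix visible actions $\mathrm{Act}$ and $\tau\notin\mathrm{Act}$. A Petri net $(S,T,F,M_0,\ell)$ has disjoint $S,T$, $F:(S\times T)\cup(T\times S)\to\mathbb N$, $M_0\in\mathbb N^S$, $\ell:T\to\mathrm{Act}\cup\{\tau\}$; ${}^\bullet t(s)=F(s,t)$, $t^\bullet(s)=F(t,s)$; $M[t\rangle M'$ iff ${}^\bullet t\le M$ and $M'=M-{}^\bullet t+t^\bullet$. Plain: $\ell$ injective and never $\tau$. ST-LTS: states $(M,U)\in\mathbb N^S\times T^*$, initial $(M_0,\varepsilon)$; $(M,U)\xrightarrow{a^+}(M-{}^\bullet t,Ut)$ iff $\ell(t)=a\in\mathrm{Act}$ and $M[t\rangle$; $(M,U)\xrightarrow{a^{-n}}(M+t^\bullet,U^{-n})$ ($n>0$) iff the $n$-th element $t$ of $U$ has label $a$, $U^{-n}$ being $U$ with it removed; $(M,U)\xrightarrow{\tau}(M',U)$ iff $M[t\rangle M'$ with $\ell(t)=\tau$. Split LTS: states $(M,U)\in\mathbb N^S\times\mathbb N^T$, initial $(M_0,\emptyset)$; $(M,U)\xrightarrow{a^+}(M-{}^\bullet t,U+\{t\})$ iff $\ell(t)=a\in\mathrm{Act}$ and $M[t\rangle$; $(M,U)\xrightarrow{a^-}(M+t^\bullet,U-\{t\})$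 iff $t\in U$ and $\ell(t)=a$; $(M,U)\xrightarrow{\tau}(M',U)$ iff $M[t\rangle M'$ with $\ell(t)=\tau$. For LTSs: $\Rightarrow$ is the reflexive transitive closure of $\xrightarrow{\tau}$; $\xrightarrow{(\alpha)}$ means $\xrightarrow{\alpha}$ or (if $\alpha=\tau$) equality. A branching bisimulation is a relation $\mathcal B$ relating initial states such that if $\mathfrak M_1\mathcal B\mathfrak M_2$ and $\mathfrak M_1\xrightarrow{\alpha}\mathfrak M_1'$ then $\mathfrak M_2\Rightarrow\mathfrak M_2^\dagger\xrightarrow{(\alpha)}\mathfrak M_2'$ with $\mathfrak M_1\mathcal B\mathfrak M_2^\dagger$, $\mathfrak M_1'\mathcal B\mathfrak M_2'$, and symmetrically. It is with explicit divergence if moreover: if $\mathfrak M_1\mathcal B\mathfrak M_2$ and there is an infinite $\tau$-sequence from $\mathfrak M_1$ all of whose states are related to $\mathfrak M_2$, then there is an infinite $\tau$-sequence from $\mathfrak M_2$ with every state of the first related to every state of the second, and symmetrically. Two nets are branching ST-bisimilar (resp. branching split bisimilar), possibly with explicit divergence, iff such a relation exists between their ST-LTSs (resp. split LTSs). *)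

theory Defs
  imports Main "HOL-Library.Multiset"
begin

text \<open>Places live in type 's, transitions in type 't (so S and T are
  automatically disjoint); the actual place/transition sets are the carriers S and T.
  Labels are 'a option: Some a is a visible action a, None is tau.\<close>

record ('s, 't, 'a) pnet =
  places  :: "'s set"
  trans   :: "'t set"
  flow_st :: "'s \<Rightarrow> 't \<Rightarrow> nat"
  flow_ts :: "'t \<Rightarrow> 's \<Rightarrow> nat"
  init    :: "'s \<Rightarrow> nat"
  lab     :: "'t \<Rightarrow> 'a option"

definition petri_net :: "('s, 't, 'a) pnet \<Rightarrow> bool" where
  "petri_net N \<longleftrightarrow>
     (\<forall>s t. flow_st N s t \<noteq> 0 \<longrightarrow> s \<in> places N \<and> t \<in> trans N) \<and>
     (\<forall>t s. flow_ts N t s \<noteq> 0 \<longrightarrow> s \<in> places N \<and> t \<in> trans N) \<and>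
     (\<forall>s. init N s \<noteq> 0 \<longrightarrow> s \<in> places N)"

definition preset :: "('s, 't, 'a) pnet \<Rightarrow> 't \<Rightarrow> 's \<Rightarrow> nat" where
  "preset N t = (\<lambda>s. flow_st N s t)"

definition postset :: "('s, 't, 'a) pnet \<Rightarrow> 't \<Rightarrow> 's \<Rightarrow> nat" where
  "postset N t = (\<lambda>s. flow_ts N t s)"

definition enabled :: "('s, 't, 'a) pnet \<Rightarrow> ('s \<Rightarrow> nat) \<Rightarrow> 't \<Rightarrow> bool" where
  "enabled N M t \<longleftrightarrow> t \<in> trans N \<and> (\<forall>s. preset N t s \<le> M s)"

definition plain :: "('s, 't, 'a) pnet \<Rightarrow> bool" where
  "plain N \<longleftrightarrow> inj_on (lab N) (trans N) \<and> (\<forall>t \<in> trans N. lab N t \<noteq> None)"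

datatype 'a st_label = STPlus 'a | STMinus 'a nat | STTau
datatype 'a split_label = SPPlus 'a | SPMinus 'a | SPTau

text \<open>ST-LTS: states (M, U) with U a sequence of transitions.  Positions in U are
  1-based as in the paper: the n-th element is U ! (n - 1).\<close>

definition st_step :: "('s, 't, 'a) pnet \<Rightarrow> ('s \<Rightarrow> nat) \<times> 't list \<Rightarrow> 'a st_label
                       \<Rightarrow> ('s \<Rightarrow> nat) \<times> 't list \<Rightarrow> bool" where
  "st_step N st \<alpha> st' \<longleftrightarrow> (case (st, st') of ((M, U), (M', U')) \<Rightarrow>
     (case \<alpha> of
        STPlus a \<Rightarrow> (\<exists>t. lab N t = Some a \<and> enabled N M t \<and>
                        M' = (\<lambda>s. M s - preset N t s) \<and> U' = U @ [t])
      | STMinus a n \<Rightarrow> (0 < n \<and> n \<le> length U \<and> lab N (U ! (n - 1)) = Some a \<and>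
                        M' = (\<lambda>s. M s + postset N (U ! (n - 1)) s) \<and>
                        U' = take (n - 1) U @ drop n U)
      | STTau \<Rightarrow> (\<exists>t. lab N t = None \<and> enabled N M t \<and>
                        M' = (\<lambda>s. M s - preset N t s + postset N t s) \<and> U' = U)))"

definition st_init :: "('s, 't, 'a) pnet \<Rightarrow> ('s \<Rightarrow> nat) \<times> 't list" where
  "st_init N = (init N, [])"

definition split_step :: "('s, 't, 'a) pnet \<Rightarrow> ('s \<Rightarrow> nat) \<times> 't multiset \<Rightarrow> 'a split_label
                       \<Rightarrow> ('s \<Rightarrow> nat) \<times> 't multiset \<Rightarrow> bool" where
  "split_step N st \<alpha> st' \<longleftrightarrow> (case (st, st') of ((M, U), (M', U')) \<Rightarrow>
     (case \<alpha> of
        SPPlus a \<Rightarrow> (\<exists>t. lab N t = Some a \<and> enabled N M t \<and>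
                        M' = (\<lambda>s. M s - preset N t s) \<and> U' = U + {#t#})
      | SPMinus a \<Rightarrow> (\<exists>t. t \<in># U \<and> lab N t = Some a \<and>
                        M' = (\<lambda>s. M s + postset N t s) \<and> U' = U - {#t#})
      | SPTau \<Rightarrow> (\<exists>t. lab N t = None \<and> enabled N M t \<and>
                        M' = (\<lambda>s. M s - preset N t s + postset N t s) \<and> U' = U)))"

definition split_init :: "('s, 't, 'a) pnet \<Rightarrow> ('s \<Rightarrow> nat) \<times> 't multiset" where
  "split_init N = (init N, {#})"

definition bb_transfer ::
  "('p \<Rightarrow> 'l \<Rightarrow> 'p \<Rightarrow> bool) \<Rightarrow> ('q \<Rightarrow> 'l \<Rightarrow> 'q \<Rightarrow> bool) \<Rightarrow> 'l
   \<Rightarrow> ('p \<Rightarrow> 'q \<Rightarrow> bool) \<Rightarrow> bool" where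
  "bb_transfer step1 step2 tau B \<longleftrightarrow>
     (\<forall>p q \<alpha> p'. B p q \<and> step1 p \<alpha> p' \<longrightarrow>
        (\<exists>qd q'. (\<lambda>x y. step2 x tau y)\<^sup>*\<^sup>* q qd \<and>
                 (step2 qd \<alpha> q' \<or> (\<alpha> = tau \<and> q' = qd)) \<and>
                 B p qd \<and> B p' q'))"

definition branching_bisim ::
  "('p \<Rightarrow> 'l \<Rightarrow> 'p \<Rightarrow> bool) \<Rightarrow> 'p \<Rightarrow> ('q \<Rightarrow> 'l \<Rightarrow> 'q \<Rightarrow> bool) \<Rightarrow> 'q \<Rightarrow> 'l
   \<Rightarrow> ('p \<Rightarrow> 'q \<Rightarrow> bool) \<Rightarrow> bool" where
  "branching_bisim step1 i1 step2 i2 tau B \<longleftrightarrow>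
     B i1 i2 \<and> bb_transfer step1 step2 tau B \<and>
     bb_transfer step2 step1 tau (\<lambda>q p. B p q)"

definition div_transfer ::
  "('p \<Rightarrow> 'l \<Rightarrow> 'p \<Rightarrow> bool) \<Rightarrow> ('q \<Rightarrow> 'l \<Rightarrow> 'q \<Rightarrow> bool) \<Rightarrow> 'l
   \<Rightarrow> ('p \<Rightarrow> 'q \<Rightarrow> bool) \<Rightarrow> bool" where
  "div_transfer step1 step2 tau B \<longleftrightarrow>
     (\<forall>p q f. B p q \<and> f 0 = p \<and> (\<forall>i. step1 (f i) tau (f (Suc i))) \<and> (\<forall>i. B (f i) q)
        \<longrightarrow> (\<exists>g. g 0 = q \<and> (\<forall>j. step2 (g j) tau (g (Suc j))) \<and>
                 (\<forall>i j. B (f i) (g j))))"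

definition explicit_divergence ::
  "('p \<Rightarrow> 'l \<Rightarrow> 'p \<Rightarrow> bool) \<Rightarrow> ('q \<Rightarrow> 'l \<Rightarrow> 'q \<Rightarrow> bool) \<Rightarrow> 'l
   \<Rightarrow> ('p \<Rightarrow> 'q \<Rightarrow> bool) \<Rightarrow> bool" where
  "explicit_divergence step1 step2 tau B \<longleftrightarrow>
     div_transfer step1 step2 tau B \<and> div_transfer step2 step1 tau (\<lambda>q p. B p q)"

definition branching_ST_bisimilar ::
  "('s1, 't1, 'a) pnet \<Rightarrow> ('s2, 't2, 'a) pnet \<Rightarrow> bool" where
  "branching_ST_bisimilar N1 N2 \<longleftrightarrow>
     (\<exists>B. branching_bisim (st_step N1) (st_init N1) (st_step N2) (st_init N2) STTau B)"

definition branching_ST_bisimilar_div ::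
  "('s1, 't1, 'a) pnet \<Rightarrow> ('s2, 't2, 'a) pnet \<Rightarrow> bool" where
  "branching_ST_bisimilar_div N1 N2 \<longleftrightarrow>
     (\<exists>B. branching_bisim (st_step N1) (st_init N1) (st_step N2) (st_init N2) STTau B \<and>
          explicit_divergence (st_step N1) (st_step N2) STTau B)"

definition branching_split_bisimilar ::
  "('s1, 't1, 'a) pnet \<Rightarrow> ('s2, 't2, 'a) pnet \<Rightarrow> bool" where
  "branching_split_bisimilar N1 N2 \<longleftrightarrow>
     (\<exists>B. branching_bisim (split_step N1) (split_init N1) (split_step N2) (split_init N2) SPTau B)"

definition branching_split_bisimilar_div ::
  "('s1, 't1, 'a) pnet \<Rightarrow> ('s2, 't2, 'a) pnet \<Rightarrow> bool" where
  "branching_split_bisimilar_div N1 N2 \<longleftrightarrow>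
     (\<exists>B. branching_bisim (split_step N1) (split_init N1) (split_step N2) (split_init N2) SPTau B \<and>
          explicit_divergence (split_step N1) (split_step N2) SPTau B)"

end

theory Submission
  imports Defs
begin

fun lm :: "'a st_label \<Rightarrow> 'a split_label" where
  "lm (STPlus a) = SPPlus a" | "lm (STMinus a n) = SPMinus a" | "lm STTau = SPTau"

lemma lm_tau_iff: "lm \<alpha> = SPTau \<longleftrightarrow> \<alpha> = STTau"
  by (cases \<alpha>) auto

definition proj :: "('s \<Rightarrow> nat) \<times> 't list \<Rightarrow> ('s \<Rightarrow> nat) \<times> 't multiset" where
  "proj p = (fst p, mset (snd p))"

lemma mset_take_drop_nth:
  assumes "i < length U"
  shows "mset (take i U @ drop (Suc i) U) = mset U - {#U!i#}"
proof -
  have "U = take i U @ U!i # drop (Suc i) U" using assms id_take_nth_drop by metis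
  then have "mset U = mset (take i U @ U!i # drop (Suc i) U)" by simp
  then show ?thesis by simp
qed

lemma st2split:
  assumes "st_step N p \<alpha> p'"
  shows "split_step N (proj p) (lm \<alpha>) (proj p')"
proof (cases \<alpha>)
  case (STMinus a n)
  obtain M U M' U' where pp: "p = (M,U)" "p' = (M',U')" by fastforce
  with assms STMinus have h: "0 < n" "n \<le> length U" "lab N (U ! (n - 1)) = Some a"
    "M' = (\<lambda>s. M s + postset N (U ! (n - 1)) s)" "U' = take (n - 1) U @ drop n U"
    by (auto simp: st_step_def)
  have "mset U' = mset U - {#U!(n-1)#}"
    using mset_take_drop_nth[of "n-1" U] h by simp
  moreover have "U!(n-1) \<in># mset U" using h by simp
  ultimately show ?thesis using pp h STMinus
    unfolding split_step_def proj_def by (simp del: One_nat_def) (rule exI[of _ "U!(n-1)"], auto)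
qed (use assms in \<open>auto simp: st_step_def split_step_def proj_def split: prod.splits\<close>)

lemma split2st:
  assumes "split_step N (proj p) \<beta> q'"
  shows "\<exists>\<alpha> p'. st_step N p \<alpha> p' \<and> lm \<alpha> = \<beta> \<and> proj p' = q'"
proof (cases \<beta>)
  case (SPMinus a)
  obtain M U where pp: "p = (M,U)" by fastforce
  obtain M' V' where qq: "q' = (M',V')" by fastforce
  from assms SPMinus pp qq obtain t where t: "t \<in># mset U" "lab N t = Some a"
    "M' = (\<lambda>s. M s + postset N t s)" "V' = mset U - {#t#}"
    by (auto simp: split_step_def proj_def)
  then obtain i where i: "i < length U" "U!i = t" by (metis in_set_conv_nth set_mset_mset)
  have "st_step N p (STMinus a (Suc i)) (M', take i U @ drop (Suc i) U)"
    using i t pp by (auto simp: st_step_def)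
  moreover have "proj (M', take i U @ drop (Suc i) U) = q'"
    using mset_take_drop_nth[OF i(1)] i t qq by (simp add: proj_def)
  ultimately show ?thesis using SPMinus by force
next
  case (SPPlus a)
  obtain M U where pp: "p = (M,U)" by fastforce
  obtain M' V' where qq: "q' = (M',V')" by fastforce
  from assms SPPlus pp qq obtain t where t: "lab N t = Some a" "enabled N M t"
    "M' = (\<lambda>s. M s - preset N t s)" "V' = mset U + {#t#}"
    by (auto simp: split_step_def proj_def)
  have "st_step N p (STPlus a) (M', U @ [t])" using t pp by (auto simp: st_step_def)
  moreover have "proj (M', U @ [t]) = q'" using t qq by (simp add: proj_def)
  ultimately show ?thesis using SPPlus by force
next
  case SPTau
  obtain M U where pp: "p = (M,U)" by fastforce
  obtain M' V' where qq: "q' = (M',V')" by fastforce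
  from assms SPTau pp qq obtain t where t: "lab N t = None" "enabled N M t"
    "M' = (\<lambda>s. M s - preset N t s + postset N t s)" "V' = mset U"
    by (auto simp: split_step_def proj_def)
  have "st_step N p STTau (M', U)" using t pp by (auto simp: st_step_def)
  moreover have "proj (M', U) = q'" using t qq by (simp add: proj_def)
  ultimately show ?thesis using SPTau by force
qed

lemma st_tau_snd: "st_step N p STTau p' \<Longrightarrow> snd p' = snd p"
  by (auto simp: st_step_def split: prod.splits)

lemma split_tau_st:
  "split_step N (M,V) SPTau (M',V') \<Longrightarrow> V' = V \<and> st_step N (M,U) STTau (M',U)"
  by (auto simp: st_step_def split_step_def)

lemma st_taus_proj:
  "(\<lambda>x y. st_step N x STTau y)\<^sup>*\<^sup>* p pd \<Longrightarrow> (\<lambda>x y. split_step N x SPTau y)\<^sup>*\<^sup>* (proj p) (proj pd)"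
proof (induction rule: rtranclp_induct)
  case (step y z)
  then show ?case using st2split[of N y STTau z]
    by (metis (no_types, lifting) lm.simps(3) rtranclp.rtrancl_into_rtrancl)
qed simp

lemma split_taus_st:
  "(\<lambda>x y. split_step N x SPTau y)\<^sup>*\<^sup>* (proj p) qd \<Longrightarrow>
   \<exists>pd. (\<lambda>x y. st_step N x STTau y)\<^sup>*\<^sup>* p pd \<and> proj pd = qd \<and> snd pd = snd p"
proof (induction rule: rtranclp_induct)
  case (step y z)
  then obtain pd where pd: "(\<lambda>x y. st_step N x STTau y)\<^sup>*\<^sup>* p pd" "proj pd = y" "snd pd = snd p"
    by blast
  with step obtain \<alpha> p' where "st_step N pd \<alpha> p'" "lm \<alpha> = SPTau" "proj p' = z"
    using split2st by metis
  then have "st_step N pd STTau p'" "proj p' = z" "snd p' = snd p"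
    using lm_tau_iff st_tau_snd pd by metis+
  then show ?case using pd rtranclp.rtrancl_into_rtrancl[of "\<lambda>x y. st_step N x STTau y" p pd p'] by blast
qed (metis rtranclp.rtrancl_refl)

lemma no_tau_st: "plain N \<Longrightarrow> \<not> st_step N p STTau p'"
  by (auto simp: st_step_def plain_def enabled_def split: prod.splits)

lemma no_tau_split: "plain N \<Longrightarrow> \<not> split_step N p SPTau p'"
  by (auto simp: split_step_def plain_def enabled_def split: prod.splits)

lemma no_taus:
  assumes "\<And>x y. \<not> R x y" "R\<^sup>*\<^sup>* a b" shows "a = b"
  using assms(2) by (induction rule: rtranclp_induct) (use assms(1) in auto)

lemma div_trivial_st: "plain N \<Longrightarrow> div_transfer (st_step N) st2 STTau R"
  unfolding div_transfer_def using no_tau_st by metis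

lemma div_trivial_split: "plain N \<Longrightarrow> div_transfer (split_step N) st2 SPTau R"
  unfolding div_transfer_def using no_tau_split by metis

definition Bs where "Bs B p q = (\<exists>x y. B x y \<and> proj x = p \<and> proj y = q)"

lemma Bs_swap: "(\<lambda>q p. Bs B p q) = Bs (\<lambda>q p. B p q)"
  unfolding Bs_def by blast

lemma transferA:
  assumes "bb_transfer (st_step N) (st_step N') STTau B"
  shows "bb_transfer (split_step N) (split_step N') SPTau (Bs B)"
  unfolding bb_transfer_def
proof (intro allI impI, elim conjE)
  fix p q \<beta> p'
  assume "Bs B p q" "split_step N p \<beta> p'"
  then obtain x y where xy: "B x y" "proj x = p" "proj y = q" by (auto simp: Bs_def)
  then obtain \<alpha> x' where x': "st_step N x \<alpha> x'" "lm \<alpha> = \<beta>" "proj x' = p'"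
    using split2st \<open>split_step N p \<beta> p'\<close> by metis
  from assms xy x' obtain yd y' where
    yy: "(\<lambda>x y. st_step N' x STTau y)\<^sup>*\<^sup>* y yd" "st_step N' yd \<alpha> y' \<or> (\<alpha> = STTau \<and> y' = yd)"
       "B x yd" "B x' y'"
    unfolding bb_transfer_def by blast
  have "(\<lambda>x y. split_step N' x SPTau y)\<^sup>*\<^sup>* q (proj yd)" using st_taus_proj yy(1) xy by blast
  moreover have "split_step N' (proj yd) \<beta> (proj y') \<or> (\<beta> = SPTau \<and> proj y' = proj yd)"
  proof (cases "st_step N' yd \<alpha> y'")
    case True then show ?thesis using st2split x'(2) by blast
  next
    case False then show ?thesis using yy(2) x'(2) by auto
  qed
  moreover have "Bs B p (proj yd)" "Bs B p' (proj y')"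
    unfolding Bs_def using yy(3,4) xy(2) x'(3) by blast+
  ultimately show "\<exists>qd q'. (\<lambda>x y. split_step N' x SPTau y)\<^sup>*\<^sup>* q qd \<and>
       (split_step N' qd \<beta> q' \<or> \<beta> = SPTau \<and> q' = qd) \<and> Bs B p qd \<and> Bs B p' q'"
    by blast
qed

lemma proj_init: "proj (st_init N) = split_init N"
  by (simp add: proj_def st_init_def split_init_def)

lemma bisimA:
  assumes "branching_bisim (st_step N1) (st_init N1) (st_step N2) (st_init N2) STTau B"
  shows "branching_bisim (split_step N1) (split_init N1) (split_step N2) (split_init N2) SPTau (Bs B)"
  using assms unfolding branching_bisim_def
  by (metis Bs_def Bs_swap proj_init transferA)

lemma divA:
  assumes pl: "plain N2"
    and tr: "bb_transfer (st_step N1) (st_step N2) STTau B"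
    and dv: "div_transfer (st_step N1) (st_step N2) STTau B"
  shows "div_transfer (split_step N1) (split_step N2) SPTau (Bs B)"
  unfolding div_transfer_def
proof (intro allI impI, elim conjE)
  fix p q f
  assume bpq: "Bs B p q" and f0: "f 0 = p" and fs: "\<forall>i. split_step N1 (f i) SPTau (f (Suc i))"
  from bpq obtain x y where xy: "B x y" "proj x = p" "proj y = q" by (auto simp: Bs_def)
  define h where "h i = (fst (f i), snd x)" for i
  have sn: "snd (f i) = mset (snd x)" for i
  proof (induction i)
    case 0 then show ?case using f0 xy(2)[symmetric] by (simp add: proj_def)
  next
    case (Suc i)
    then show ?case using fs split_tau_st
      by (metis prod.collapse)
  qed
  have hs: "st_step N1 (h i) STTau (h (Suc i))" for i
    using fs split_tau_st unfolding h_def by (metis prod.collapse)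
  have h0: "h 0 = x" using f0 xy(2)[symmetric] by (simp add: h_def proj_def)
  have hb: "B (h i) y" for i
  proof (induction i)
    case 0 then show ?case using h0 xy by simp
  next
    case (Suc i)
    from tr Suc hs[of i] obtain yd y' where
      yy: "(\<lambda>x y. st_step N2 x STTau y)\<^sup>*\<^sup>* y yd" "st_step N2 yd STTau y' \<or> y' = yd"
        "B (h (Suc i)) y'"
      unfolding bb_transfer_def by blast
    have "yd = y" using no_taus[OF no_tau_st[OF pl] yy(1)] by simp
    moreover have "y' = yd" using yy(2) no_tau_st[OF pl] by blast
    ultimately show ?case using yy(3) by simp
  qed
  have pre: "B x y \<and> h 0 = x \<and> (\<forall>i. st_step N1 (h i) STTau (h (Suc i))) \<and> (\<forall>i. B (h i) y)"
    using hb hs h0 xy(1) by blast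
  obtain g where "g 0 = y" "\<forall>j. st_step N2 (g j) STTau (g (Suc j))"
    using mp[OF spec[OF spec[OF spec[OF dv[unfolded div_transfer_def], of x], of y], of h] pre] by blast
  then have False using no_tau_st[OF pl] by blast
  then show "\<exists>g. g 0 = q \<and> (\<forall>j. split_step N2 (g j) SPTau (g (Suc j))) \<and> (\<forall>i j. Bs B (f i) (g j))"
    by blast
qed

definition Bt where
  "Bt N1 N2 B x y = (B (proj x) (proj y) \<and> map (lab N1) (snd x) = map (lab N2) (snd y) \<and>
                     set (snd y) \<subseteq> trans N2)"

lemma plus_lemma:
  assumes "split_step N (proj p) (SPPlus a) q'"
  shows "\<exists>t. st_step N p (STPlus a) (fst q', snd p @ [t]) \<and> lab N t = Some a \<and> t \<in> trans N \<and>
             proj (fst q', snd p @ [t]) = q'"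
proof -
  obtain M U where pp: "p = (M,U)" by fastforce
  obtain M' V' where qq: "q' = (M',V')" by fastforce
  from assms pp qq obtain t where t: "lab N t = Some a" "enabled N M t"
    "M' = (\<lambda>s. M s - preset N t s)" "V' = mset U + {#t#}"
    by (auto simp: split_step_def proj_def)
  then show ?thesis using pp qq by (auto simp: st_step_def proj_def enabled_def)
qed

lemma minus_lemma:
  assumes pl: "plain N" and st: "set U \<subseteq> trans N" and n: "0 < n" "n \<le> length U"
    and l: "lab N (U!(n-1)) = Some a"
    and s: "split_step N (M, mset U) (SPMinus a) q''"
  shows "q'' = proj (\<lambda>s. M s + postset N (U!(n-1)) s, take (n-1) U @ drop n U)"
proof -
  obtain M' V' where qq: "q'' = (M',V')" by fastforce
  from s qq obtain t where t: "t \<in># mset U" "lab N t = Some a"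
    "M' = (\<lambda>s. M s + postset N t s)" "V' = mset U - {#t#}"
    by (auto simp: split_step_def)
  have "U!(n-1) \<in> trans N" using st n by auto
  moreover have "t \<in> trans N" using st t by auto
  ultimately have "t = U!(n-1)" using pl l t unfolding plain_def inj_on_def by metis
  moreover have "mset (take (n-1) U @ drop n U) = mset U - {#U!(n-1)#}"
    using mset_take_drop_nth[of "n-1" U] n by simp
  ultimately show ?thesis using qq t by (simp add: proj_def)
qed

lemma labs_nth:
  assumes "map f U1 = map g U2" "i < length U1"
  shows "f (U1!i) = g (U2!i)" "i < length U2"
  using assms by (metis length_map nth_map)+

lemma labs_rm:
  assumes "map f U1 = map g U2"
  shows "map f (take k U1 @ drop m U1) = map g (take k U2 @ drop m U2)"
  using assms by (simp add: take_map[symmetric] drop_map[symmetric])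

lemma set_rm: "set (take k U @ drop m U) \<subseteq> set U"
  using set_take_subset set_drop_subset by fastforce

lemma transferB1:
  assumes pl: "plain N2" and tr: "bb_transfer (split_step N1) (split_step N2) SPTau B"
  shows "bb_transfer (st_step N1) (st_step N2) STTau (Bt N1 N2 B)"
  unfolding bb_transfer_def
proof (intro allI impI, elim conjE)
  fix p q \<alpha> p'
  assume bt: "Bt N1 N2 B p q" and sp: "st_step N1 p \<alpha> p'"
  obtain M1 U1 where pp: "p = (M1,U1)" by fastforce
  obtain M2 U2 where qq: "q = (M2,U2)" by fastforce
  from bt pp qq have b: "B (proj p) (proj q)" and lb: "map (lab N1) U1 = map (lab N2) U2"
    and st2: "set U2 \<subseteq> trans N2" by (auto simp: Bt_def)
  from tr b st2split[OF sp] obtain qd q'' where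
    yy: "(\<lambda>x y. split_step N2 x SPTau y)\<^sup>*\<^sup>* (proj q) qd"
      "split_step N2 qd (lm \<alpha>) q'' \<or> (lm \<alpha> = SPTau \<and> q'' = qd)" "B (proj p) qd" "B (proj p') q''"
    unfolding bb_transfer_def by blast
  have qd: "qd = proj q" using no_taus[OF no_tau_split[OF pl] yy(1)] by simp
  show "\<exists>qd q'. (\<lambda>x y. st_step N2 x STTau y)\<^sup>*\<^sup>* q qd \<and>
          (st_step N2 qd \<alpha> q' \<or> \<alpha> = STTau \<and> q' = qd) \<and> Bt N1 N2 B p qd \<and> Bt N1 N2 B p' q'"
  proof (cases \<alpha>)
    case STTau
    then have "q'' = proj q" using yy(2) qd no_tau_split[OF pl] by auto
    moreover have "snd p' = snd p" using sp STTau st_tau_snd by metis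
    ultimately have "Bt N1 N2 B p' q" using yy(4) bt by (simp add: Bt_def)
    then show ?thesis using bt STTau by blast
  next
    case (STPlus a)
    then have s2: "split_step N2 (proj q) (SPPlus a) q''" using yy(2) qd by auto
    from plus_lemma[OF s2] obtain t2 where t2: "st_step N2 q (STPlus a) (fst q'', snd q @ [t2])"
      "lab N2 t2 = Some a" "t2 \<in> trans N2" "proj (fst q'', snd q @ [t2]) = q''" by blast
    from sp STPlus pp obtain t where t: "lab N1 t = Some a" "snd p' = U1 @ [t]"
      by (auto simp: st_step_def split: prod.splits)
    have "Bt N1 N2 B p' (fst q'', snd q @ [t2])"
      using t t2 yy(4) lb st2 qq by (simp add: Bt_def)
    then show ?thesis using bt t2(1) STPlus by blast
  next
    case (STMinus a n)
    from sp STMinus pp have h: "0 < n" "n \<le> length U1" "lab N1 (U1 ! (n - 1)) = Some a"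
      "p' = (\<lambda>s. M1 s + postset N1 (U1 ! (n - 1)) s, take (n - 1) U1 @ drop n U1)"
      by (auto simp: st_step_def split: prod.splits)
    have l2: "lab N2 (U2!(n-1)) = Some a" "n - 1 < length U2"
      using labs_nth[OF lb, of "n-1"] h by auto
    define q' where "q' = (\<lambda>s. M2 s + postset N2 (U2!(n-1)) s, take (n-1) U2 @ drop n U2)"
    have s2: "split_step N2 (M2, mset U2) (SPMinus a) q''" using yy(2) qd STMinus qq
      by (auto simp: proj_def)
    have "q'' = proj q'" using minus_lemma[OF pl st2 h(1) _ l2(1) s2] l2 h(1) q'_def by simp
    moreover have "st_step N2 q \<alpha> q'" using STMinus qq h l2 q'_def
      by (auto simp: st_step_def)
    moreover have "Bt N1 N2 B p' q'" unfolding Bt_def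
    proof (intro conjI)
      show "B (proj p') (proj q')" using yy(4) \<open>q'' = proj q'\<close> by simp
      show "map (lab N1) (snd p') = map (lab N2) (snd q')" using h(4) q'_def labs_rm[OF lb] by simp
      show "set (snd q') \<subseteq> trans N2" using q'_def st2 set_rm[of "n-1" U2 n] subset_trans by (metis snd_conv)
    qed
    ultimately show ?thesis using bt by blast
  qed
qed

lemma transferB2:
  assumes pl: "plain N2" and tr: "bb_transfer (split_step N1) (split_step N2) SPTau B"
    and tr2: "bb_transfer (split_step N2) (split_step N1) SPTau (\<lambda>q p. B p q)"
  shows "bb_transfer (st_step N2) (st_step N1) STTau (\<lambda>q p. Bt N1 N2 B p q)"
  unfolding bb_transfer_def
proof (intro allI impI, elim conjE)
  fix q p \<alpha> q'
  assume bt: "Bt N1 N2 B p q" and sq: "st_step N2 q \<alpha> q'"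
  obtain M1 U1 where pp: "p = (M1,U1)" by fastforce
  obtain M2 U2 where qq: "q = (M2,U2)" by fastforce
  from bt pp qq have b: "B (proj p) (proj q)" and lb: "map (lab N1) U1 = map (lab N2) U2"
    and st2: "set U2 \<subseteq> trans N2" by (auto simp: Bt_def)
  show "\<exists>pd p'. (\<lambda>x y. st_step N1 x STTau y)\<^sup>*\<^sup>* p pd \<and>
          (st_step N1 pd \<alpha> p' \<or> \<alpha> = STTau \<and> p' = pd) \<and> Bt N1 N2 B pd q \<and> Bt N1 N2 B p' q'"
  proof (cases \<alpha>)
    case STTau
    then show ?thesis using sq no_tau_st[OF pl] by blast
  next
    case (STPlus a)
    from sq STPlus qq obtain t2 where t2: "lab N2 t2 = Some a" "t2 \<in> trans N2"
      "snd q' = U2 @ [t2]"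
      by (auto simp: st_step_def enabled_def split: prod.splits)
    from tr2 b st2split[OF sq] STPlus obtain pd p'' where
      yy: "(\<lambda>x y. split_step N1 x SPTau y)\<^sup>*\<^sup>* (proj p) pd"
        "split_step N1 pd (SPPlus a) p''" "B pd (proj q)" "B p'' (proj q')"
      unfolding bb_transfer_def by fastforce
    from split_taus_st[OF yy(1)] obtain pds where
      pds: "(\<lambda>x y. st_step N1 x STTau y)\<^sup>*\<^sup>* p pds" "proj pds = pd" "snd pds = snd p" by blast
    from plus_lemma[of N1 pds a p''] yy(2) pds obtain t1 where
      t1: "st_step N1 pds (STPlus a) (fst p'', snd pds @ [t1])" "lab N1 t1 = Some a"
        "proj (fst p'', snd pds @ [t1]) = p''" by blast
    have "Bt N1 N2 B pds q" using yy(3) pds lb st2 pp qq by (simp add: Bt_def)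
    moreover have "Bt N1 N2 B (fst p'', snd pds @ [t1]) q'"
      using yy(4) t1 t2 pds lb st2 pp by (simp add: Bt_def)
    ultimately show ?thesis using pds t1 STPlus by blast
  next
    case (STMinus a n)
    from sq STMinus qq have h: "0 < n" "n \<le> length U2" "lab N2 (U2 ! (n - 1)) = Some a"
      "q' = (\<lambda>s. M2 s + postset N2 (U2 ! (n - 1)) s, take (n - 1) U2 @ drop n U2)"
      by (auto simp: st_step_def split: prod.splits)
    have lbs: "map (lab N2) U2 = map (lab N1) U1" using lb by simp
    have l1: "lab N1 (U1!(n-1)) = Some a" "n - 1 < length U1"
      using labs_nth[OF lbs, of "n-1"] h by auto
    define p' where "p' = (\<lambda>s. M1 s + postset N1 (U1!(n-1)) s, take (n-1) U1 @ drop n U1)"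
    have sp: "st_step N1 p \<alpha> p'" using STMinus pp h l1 p'_def by (auto simp: st_step_def)
    from tr b st2split[OF sp] obtain qd q'' where
      yy: "(\<lambda>x y. split_step N2 x SPTau y)\<^sup>*\<^sup>* (proj q) qd"
        "split_step N2 qd (lm \<alpha>) q'' \<or> (lm \<alpha> = SPTau \<and> q'' = qd)" "B (proj p') q''"
      unfolding bb_transfer_def by blast
    have qd: "qd = proj q" using no_taus[OF no_tau_split[OF pl] yy(1)] by simp
    have s2: "split_step N2 (M2, mset U2) (SPMinus a) q''" using yy(2) qd STMinus qq
      by (auto simp: proj_def)
    have "q'' = proj q'" using minus_lemma[OF pl st2 h(1) h(2) h(3) s2] h(4) by simp
    have "Bt N1 N2 B p' q'" unfolding Bt_def
    proof (intro conjI)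
      show "B (proj p') (proj q')" using yy(3) \<open>q'' = proj q'\<close> by simp
      show "map (lab N1) (snd p') = map (lab N2) (snd q')" using h(4) p'_def labs_rm[OF lb] by simp
      show "set (snd q') \<subseteq> trans N2" using h(4) st2 set_rm[of "n-1" U2 n] subset_trans by (metis snd_conv)
    qed
    then show ?thesis using bt sp by blast
  qed
qed

lemma bisimB:
  assumes pl: "plain N2"
    and "branching_bisim (split_step N1) (split_init N1) (split_step N2) (split_init N2) SPTau B"
  shows "branching_bisim (st_step N1) (st_init N1) (st_step N2) (st_init N2) STTau (Bt N1 N2 B)"
proof -
  from assms(2) have b0: "B (split_init N1) (split_init N2)"
    and t1: "bb_transfer (split_step N1) (split_step N2) SPTau B"
    and t2: "bb_transfer (split_step N2) (split_step N1) SPTau (\<lambda>q p. B p q)"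
    unfolding branching_bisim_def by auto
  have "Bt N1 N2 B (st_init N1) (st_init N2)"
    using b0 proj_init[of N1] proj_init[of N2] by (simp add: Bt_def st_init_def)
  then show ?thesis unfolding branching_bisim_def
    using transferB1[OF pl t1] transferB2[OF pl t1 t2] by blast
qed

lemma divB:
  assumes pl: "plain N2"
    and dv: "div_transfer (split_step N1) (split_step N2) SPTau B"
  shows "div_transfer (st_step N1) (st_step N2) STTau (Bt N1 N2 B)"
  unfolding div_transfer_def
proof (intro allI impI, elim conjE)
  fix p q f
  assume bpq: "Bt N1 N2 B p q" and f0: "f 0 = p" and fs: "\<forall>i. st_step N1 (f i) STTau (f (Suc i))"
    and fb: "\<forall>i. Bt N1 N2 B (f i) q"
  have "\<forall>i. split_step N1 (proj (f i)) SPTau (proj (f (Suc i)))"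
    using fs st2split by (metis lm.simps(3))
  moreover have "\<forall>i. B (proj (f i)) (proj q)" using fb by (simp add: Bt_def)
  ultimately have pre: "B (proj p) (proj q) \<and> (proj \<circ> f) 0 = proj p \<and>
     (\<forall>i. split_step N1 ((proj \<circ> f) i) SPTau ((proj \<circ> f) (Suc i))) \<and> (\<forall>i. B ((proj \<circ> f) i) (proj q))"
    using bpq f0 by (simp add: Bt_def)
  obtain g where "g 0 = proj q" "\<forall>j. split_step N2 (g j) SPTau (g (Suc j))"
    using mp[OF spec[OF spec[OF spec[OF dv[unfolded div_transfer_def], of "proj p"], of "proj q"], of "proj \<circ> f"] pre] by blast
  then have False using no_tau_split[OF pl] by blast
  then show "\<exists>g. g 0 = q \<and> (\<forall>j. st_step N2 (g j) STTau (g (Suc j))) \<and> (\<forall>i j. Bt N1 N2 B (f i) (g j))"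
    by blast
qed

theorem proposition3p15:
  fixes N1 :: "('s1, 't1, 'a) pnet" and N2 :: "('s2, 't2, 'a) pnet"
  assumes "petri_net N1" and "petri_net N2" and "plain N2"
  shows "(branching_ST_bisimilar N1 N2 \<longleftrightarrow> branching_split_bisimilar N1 N2) \<and>
         (branching_ST_bisimilar_div N1 N2 \<longleftrightarrow> branching_split_bisimilar_div N1 N2)"
proof -
  have 1: "branching_ST_bisimilar N1 N2 \<longleftrightarrow> branching_split_bisimilar N1 N2"
    unfolding branching_ST_bisimilar_def branching_split_bisimilar_def
    using bisimA bisimB[OF assms(3)] by blast
  have 2: "branching_ST_bisimilar_div N1 N2 \<Longrightarrow> branching_split_bisimilar_div N1 N2"
  proof -
    assume "branching_ST_bisimilar_div N1 N2"
    then obtain B where b: "branching_bisim (st_step N1) (st_init N1) (st_step N2) (st_init N2) STTau B"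
      and d: "explicit_divergence (st_step N1) (st_step N2) STTau B"
      unfolding branching_ST_bisimilar_def branching_ST_bisimilar_div_def by blast
    have "explicit_divergence (split_step N1) (split_step N2) SPTau (Bs B)"
      using divA[OF assms(3)] b d div_trivial_split[OF assms(3)]
      unfolding explicit_divergence_def branching_bisim_def by blast
    then show ?thesis using bisimA[OF b] unfolding branching_split_bisimilar_div_def by blast
  qed
  have 3: "branching_split_bisimilar_div N1 N2 \<Longrightarrow> branching_ST_bisimilar_div N1 N2"
  proof -
    assume "branching_split_bisimilar_div N1 N2"
    then obtain B where b: "branching_bisim (split_step N1) (split_init N1) (split_step N2) (split_init N2) SPTau B"
      and d: "explicit_divergence (split_step N1) (split_step N2) SPTau B"
      unfolding branching_split_bisimilar_div_def by blast
    have "explicit_divergence (st_step N1) (st_step N2) STTau (Bt N1 N2 B)"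
      using divB[OF assms(3)] d div_trivial_st[OF assms(3)]
      unfolding explicit_divergence_def by blast
    then show ?thesis using bisimB[OF assms(3) b] unfolding branching_ST_bisimilar_div_def by blast
  qed
  show ?thesis using 1 2 3 by blast
qed

end
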